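(* Let $\xi>0$ be real, let $b\ge0$ and $N\ge2$ be integers, and for integers $0\le d\le N-1$ and $0\le l\le 2d$ put \begin{equation*} f_{d,l} = \exp\left(\frac{(2b+1)(d^2+d)\xi}{2N}\right) \cdot 2\sinh\left(\frac{(2d+1)\xi}{2N}\right) \cdot \prod_{k=1}^{l}4 \sinh\left(\frac{(2d+1+k)\xi}{2N}\right) \sinh\left(\frac{(2d+1-k)\xi}{2N}\right). \end{equation*} Then for all integers $l,d$ with $0\le d\le N-2$ and $0\le l\le2d$ we have $f_{d,l}<f_{N-1,l}$. *)

theory Defs
  imports Complex_Main
begin

definition f :: "real \<Rightarrow> nat \<Rightarrow> nat \<Rightarrow> nat \<Rightarrow> nat \<Rightarrow> real" where
  "f \<xi> b N d l =
     exp ((2 * real b + 1) * (real d ^ 2 + real d) * \<xi> / (2 * real N))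
     * (2 * sinh ((2 * real d + 1) * \<xi> / (2 * real N)))
     * (\<Prod>k=1..l. 4 * sinh ((2 * real d + 1 + real k) * \<xi> / (2 * real N))
                     * sinh ((2 * real d + 1 - real k) * \<xi> / (2 * real N)))"

end

theory Submission
  imports Defs
begin

lemma factor_mono:
  fixes c :: real and d D k :: nat
  assumes c: "c > 0" and dD: "d < D" and k: "k \<le> 2 * d"
  shows "0 < 4 * sinh ((2 * real d + 1 + real k) * c) * sinh ((2 * real d + 1 - real k) * c)"
    and "4 * sinh ((2 * real d + 1 + real k) * c) * sinh ((2 * real d + 1 - real k) * c)
         \<le> 4 * sinh ((2 * real D + 1 + real k) * c) * sinh ((2 * real D + 1 - real k) * c)"
proof -
  have k': "real k \<le> 2 * real d" using k by linarith
  have dD': "real d \<le> real D" using dD by simp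
  have p1: "0 < sinh ((2 * real d + 1 + real k) * c)" using c by simp
  have p2: "0 < sinh ((2 * real d + 1 - real k) * c)" using c k' by simp
  show "0 < 4 * sinh ((2 * real d + 1 + real k) * c) * sinh ((2 * real d + 1 - real k) * c)"
    using p1 p2 by simp
  have m1: "sinh ((2 * real d + 1 + real k) * c) \<le> sinh ((2 * real D + 1 + real k) * c)"
    using c dD' by simp
  have m2: "sinh ((2 * real d + 1 - real k) * c) \<le> sinh ((2 * real D + 1 - real k) * c)"
    using c dD' by simp
  have "sinh ((2 * real d + 1 + real k) * c) * sinh ((2 * real d + 1 - real k) * c)
      \<le> sinh ((2 * real D + 1 + real k) * c) * sinh ((2 * real D + 1 - real k) * c)"
    using m1 m2 p1 p2 by (intro mult_mono) auto
  then show "4 * sinh ((2 * real d + 1 + real k) * c) * sinh ((2 * real d + 1 - real k) * c)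
         \<le> 4 * sinh ((2 * real D + 1 + real k) * c) * sinh ((2 * real D + 1 - real k) * c)"
    by simp
qed

theorem corollary3p2:
  fixes \<xi> :: real and b N d l :: nat
  assumes "\<xi> > 0" and "N \<ge> 2" and "d \<le> N - 2" and "l \<le> 2 * d"
  shows "f \<xi> b N d l < f \<xi> b N (N - 1) l"
proof -
  define c where "c = \<xi> / (2 * real N)"
  define D where "D = N - 1"
  have c: "c > 0" using assms unfolding c_def by simp
  have dD: "d < D" using assms unfolding D_def by linarith
  have eq: "\<And>x. x * \<xi> / (2 * real N) = x * c" unfolding c_def by simp
  have fe: "\<And>d'. f \<xi> b N d' l =
     exp ((2 * real b + 1) * (real d' ^ 2 + real d') * c)
     * (2 * sinh ((2 * real d' + 1) * c))
     * (\<Prod>k=1..l. 4 * sinh ((2 * real d' + 1 + real k) * c)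
                     * sinh ((2 * real d' + 1 - real k) * c))"
    unfolding f_def eq by simp
  define P where "P = (\<lambda>d'. \<Prod>k=1..l. 4 * sinh ((2 * real d' + 1 + real k) * c)
                     * sinh ((2 * real d' + 1 - real k) * c))"
  have Pp: "0 < P d" unfolding P_def
    using factor_mono(1)[OF c dD] assms(4) by (intro prod_pos) auto
  have Pm: "P d \<le> P D" unfolding P_def
    proof (rule prod_mono)
    fix i assume i: "i \<in> {1..l}"
    then have "i \<le> 2 * d" using assms(4) by simp
    from factor_mono[OF c dD this] show "0 \<le> 4 * sinh ((2 * real d + 1 + real i) * c) * sinh ((2 * real d + 1 - real i) * c) \<and>
      4 * sinh ((2 * real d + 1 + real i) * c) * sinh ((2 * real d + 1 - real i) * c)
      \<le> 4 * sinh ((2 * real D + 1 + real i) * c) * sinh ((2 * real D + 1 - real i) * c)"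
      by linarith
  qed
  have dD': "real d < real D" using dD by simp
  have "(real d ^ 2 + real d) < (real D ^ 2 + real D)"
    using dD' by (smt (verit) of_nat_0_le_iff power_strict_mono zero_less_numeral)
  then have e: "exp ((2 * real b + 1) * (real d ^ 2 + real d) * c) < exp ((2 * real b + 1) * (real D ^ 2 + real D) * c)"
    using c by simp
  have s: "2 * sinh ((2 * real d + 1) * c) < 2 * sinh ((2 * real D + 1) * c)" using c dD' by simp
  have s0: "0 < 2 * sinh ((2 * real d + 1) * c)" using c by simp
  have "exp ((2 * real b + 1) * (real d ^ 2 + real d) * c) * (2 * sinh ((2 * real d + 1) * c))
      < exp ((2 * real b + 1) * (real D ^ 2 + real D) * c) * (2 * sinh ((2 * real D + 1) * c))"
    using s0 by (intro mult_strict_mono[OF e s]) (simp_all add: less_imp_le)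
  note A = this
  have A0: "0 \<le> exp ((2 * real b + 1) * (real d ^ 2 + real d) * c) * (2 * sinh ((2 * real d + 1) * c))"
    using s0 by simp
  have "exp ((2 * real b + 1) * (real d ^ 2 + real d) * c) * (2 * sinh ((2 * real d + 1) * c)) * P d
      < exp ((2 * real b + 1) * (real D ^ 2 + real D) * c) * (2 * sinh ((2 * real D + 1) * c)) * P D"
    by (rule mult_less_le_imp_less[OF A Pm A0 Pp])
  then show ?thesis unfolding fe P_def D_def .
qed

end
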